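(* Assume $D^SU\le0$ on $\mathbb{R}^d$. Let $(k_j,\varepsilon_j)$ be a sequence with $k_j\to+\infty$, $\varepsilon_j\to0$, $0<\varepsilon_j\le1$, such that $\rho_{k_j,\varepsilon_j}\to\rho$ in $C([0,T];L^1_{loc}(\mathbb{R}^d))$ and $p_{k_j,\varepsilon_j}\rightharpoonup p$ weakly-$*$ in $L^\infty(Q_T)$. Then $0\le\rho\le1$, $0\le p\le1$, \[ \partial_t\rho+\nabla\cdot\big(\rho(1-p)U\big)=0\quad\text{in }\mathcal{D}'((0,T)\times\mathbb{R}^d), \] and $p(1-\rho)=0$ almost everywhere in $Q_T$.
   Context: Setting: let $d\ge1$, $T>0$, $U\in W^{2,\infty}(\mathbb{R}^d;\mathbb{R}^d)$, $Q_T=[0,T]\times\mathbb{R}^d$. For $k>0$ let $F_k(\rho)=\rho(1-\rho^k)$ for $\rho\in[0,1]$. The initial datum $\rho^0\in L^1(\mathbb{R}^d)\cap L^\infty(\mathbb{R}^d)\cap BV(\mathbb{R}^d)$ satisfies $0\le\rho^0\le1$ and $\int_{\mathbb{R}^d}\rho^0=1$. For $k>0$, $\varepsilon>0$, $\rho_{k,\varepsilon}$ denotes the unique solution in $L^1(Q_T)\cap L^\infty(Q_T)$ of the parabolic problem $\partial_t\rho+\nabla\cdot(F_k(\rho)U)=\varepsilon\Delta\rho$ on $Q_T$, $\rho(0)=\rho^0$; it is smooth on $(0,T]\times\mathbb{R}^d$, satisfies $0\le\rho_{k,\varepsilon}\le1$ and $\int\rho_{k,\varepsilon}(t)\,dx=1$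 for all $t$. The pressure is $p_{k,\varepsilon}=\rho_{k,\varepsilon}^k$. $D^SU=\tfrac12(DU+DU^{T})$; $D^SU\le0$ in the sense of symmetric matrices. *)

theory Defs
  imports "HOL-Analysis.Analysis"
begin

definition dderiv :: "('a::euclidean_space \<Rightarrow> real) \<Rightarrow> 'a \<Rightarrow> 'a \<Rightarrow> real" where
  "dderiv f v x = frechet_derivative f (at x) v"

fun iter_dderiv :: "('a::euclidean_space \<Rightarrow> real) \<Rightarrow> 'a list \<Rightarrow> 'a \<Rightarrow> real" where
  "iter_dderiv f [] = f"
| "iter_dderiv f (v # vs) = dderiv (iter_dderiv f vs) v"

definition smooth_on :: "'a::euclidean_space set \<Rightarrow> ('a \<Rightarrow> real) \<Rightarrow> bool" where
  "smooth_on S f \<longleftrightarrow> (\<forall>vs. \<forall>x\<in>S. iter_dderiv f vs differentiable (at x))"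

definition test_fun :: "'a::euclidean_space set \<Rightarrow> ('a \<Rightarrow> real) \<Rightarrow> bool" where
  "test_fun Om \<phi> \<longleftrightarrow> smooth_on UNIV \<phi> \<and> compact (closure {x. \<phi> x \<noteq> 0})
      \<and> closure {x. \<phi> x \<noteq> 0} \<subseteq> Om"

definition dt :: "(real \<times> (real^'d) \<Rightarrow> real) \<Rightarrow> real \<times> (real^'d) \<Rightarrow> real" where
  "dt \<phi> = dderiv \<phi> (1, 0)"

definition dx :: "'d::finite \<Rightarrow> (real \<times> (real^'d) \<Rightarrow> real) \<Rightarrow> real \<times> (real^'d) \<Rightarrow> real" where
  "dx i \<phi> = dderiv \<phi> (0, axis i 1)"

definition grad_x :: "(real \<times> (real^'d::finite) \<Rightarrow> real) \<Rightarrow> real \<times> (real^'d) \<Rightarrow> real^'d" where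
  "grad_x \<phi> z = (\<chi> i. dx i \<phi> z)"

definition lap_x :: "(real \<times> (real^'d::finite) \<Rightarrow> real) \<Rightarrow> real \<times> (real^'d) \<Rightarrow> real" where
  "lap_x \<phi> z = (\<Sum>i\<in>UNIV. dx i (dx i \<phi>) z)"

definition QT :: "real \<Rightarrow> (real \<times> (real^'d::finite)) set" where
  "QT T = {0..T} \<times> UNIV"

definition Linf :: "'a::euclidean_space set \<Rightarrow> ('a \<Rightarrow> real) \<Rightarrow> bool" where
  "Linf S f \<longleftrightarrow> f \<in> borel_measurable lborel \<and> (\<exists>C. AE x in lborel. x \<in> S \<longrightarrow> \<bar>f x\<bar> \<le> C)"

definition weak_partial :: "(real^'d::finite \<Rightarrow> real) \<Rightarrow> 'd \<Rightarrow> (real^'d \<Rightarrow> real) \<Rightarrow> bool" where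
  "weak_partial f i g \<longleftrightarrow> (\<forall>\<phi>. test_fun UNIV \<phi> \<longrightarrow>
      (\<integral>x. f x * dderiv \<phi> (axis i 1) x \<partial>lborel) = - (\<integral>x. g x * \<phi> x \<partial>lborel))"

definition W2inf :: "(real^'d::finite \<Rightarrow> real^'d) \<Rightarrow> bool" where
  "W2inf U \<longleftrightarrow> (\<exists>G H. (\<forall>m. Linf UNIV (\<lambda>x. U x $ m))
      \<and> (\<forall>m i. Linf UNIV (G m i) \<and> weak_partial (\<lambda>x. U x $ m) i (G m i))
      \<and> (\<forall>m i j. Linf UNIV (H m i j) \<and> weak_partial (G m i) j (H m i j)))"

definition DSU_nonpos :: "(real^'d::finite \<Rightarrow> real^'d) \<Rightarrow> bool" where
  "DSU_nonpos U \<longleftrightarrow> (\<exists>G. (\<forall>m i. weak_partial (\<lambda>x. U x $ m) i (G m i))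
      \<and> (AE x in lborel. \<forall>\<xi>::real^'d.
           (\<Sum>m\<in>UNIV. \<Sum>i\<in>UNIV. \<xi> $ m * ((G m i x + G i m x) / 2) * \<xi> $ i) \<le> 0))"

definition div_field :: "(real^'d::finite \<Rightarrow> real^'d) \<Rightarrow> real^'d \<Rightarrow> real" where
  "div_field \<phi> x = (\<Sum>i\<in>UNIV. dderiv (\<lambda>y. \<phi> y $ i) (axis i 1) x)"

definition BV :: "(real^'d::finite \<Rightarrow> real) \<Rightarrow> bool" where
  "BV f \<longleftrightarrow> integrable lborel f \<and> (\<exists>M. \<forall>\<phi>::real^'d \<Rightarrow> real^'d.
      (\<forall>i. test_fun UNIV (\<lambda>y. \<phi> y $ i)) \<and> (\<forall>y. norm (\<phi> y) \<le> 1) \<longrightarrow>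
      (\<integral>x. f x * div_field \<phi> x \<partial>lborel) \<le> M)"

definition Fk :: "real \<Rightarrow> real \<Rightarrow> real" where
  "Fk k r = r * (1 - r powr k)"

definition parabolic_sol ::
  "(real^'d::finite \<Rightarrow> real^'d) \<Rightarrow> (real^'d \<Rightarrow> real) \<Rightarrow> real \<Rightarrow> real \<Rightarrow> real
     \<Rightarrow> (real \<times> (real^'d) \<Rightarrow> real) \<Rightarrow> bool" where
  "parabolic_sol U rho0 T k eps r \<longleftrightarrow>
     set_integrable lborel (QT T) r \<and> Linf (QT T) r
   \<and> (\<forall>\<phi>. test_fun ({..<T} \<times> UNIV) \<phi> \<longrightarrow>
        (LINT z:QT T|lborel. r z * dt \<phi> z + Fk k (r z) * (U (snd z) \<bullet> grad_x \<phi> z)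
                              + eps * r z * lap_x \<phi> z)
        + (\<integral>x. rho0 x * \<phi> (0, x) \<partial>lborel) = 0)
   \<and> smooth_on ({0<..<T} \<times> UNIV) r
   \<and> (\<forall>z\<in>QT T. 0 \<le> r z \<and> r z \<le> 1)
   \<and> (\<forall>t\<in>{0..T}. integrable lborel (\<lambda>x. r (t, x)) \<and> (\<integral>x. r (t, x) \<partial>lborel) = 1)"

end

theory Submission
  imports Defs
begin


lemma dderiv_zero_outside:
  fixes f :: "'a::euclidean_space \<Rightarrow> real"
  assumes "closed S" "\<And>z. z \<notin> S \<Longrightarrow> f z = 0" "z \<notin> S"
  shows "dderiv f v z = 0"
proof -
  have "((\<lambda>_. 0) has_derivative (\<lambda>h. 0)) (at z)" by simp
  then have "(f has_derivative (\<lambda>h. 0)) (at z)"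
    by (rule has_derivative_transform_within_open[of _ _ _ _ "- S"]) (use assms in auto)
  then have "(\<lambda>h. 0) = frechet_derivative f (at z)" by (rule frechet_derivative_at)
  then show ?thesis unfolding dderiv_def by (metis)
qed

lemma iter_zero_outside:
  fixes f :: "'a::euclidean_space \<Rightarrow> real"
  assumes "closed S" "\<And>z. z \<notin> S \<Longrightarrow> f z = 0" "z \<notin> S"
  shows "iter_dderiv f vs z = 0"
  using assms(3)
proof (induction vs arbitrary: z)
  case Nil
  then show ?case using assms by simp
next
  case (Cons v vs)
  then show ?case using dderiv_zero_outside[OF assms(1), of "iter_dderiv f vs"] by simp
qed

lemma iter_cont:
  fixes f :: "'a::euclidean_space \<Rightarrow> real"
  assumes "smooth_on UNIV f"
  shows "continuous_on UNIV (iter_dderiv f vs)"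
  using assms unfolding smooth_on_def
  by (meson continuous_at_imp_continuous_on differentiable_imp_continuous_within iso_tuple_UNIV_I)

lemma iter_bounded:
  fixes f :: "'a::euclidean_space \<Rightarrow> real"
  assumes "smooth_on UNIV f" "compact S" "\<And>z. z \<notin> S \<Longrightarrow> f z = 0"
  shows "\<exists>M. \<forall>z. \<bar>iter_dderiv f vs z\<bar> \<le> M"
proof -
  have c: "continuous_on UNIV (iter_dderiv f vs)" by (rule iter_cont[OF assms(1)])
  have "compact (iter_dderiv f vs ` S)"
    by (rule compact_continuous_image[OF continuous_on_subset[OF c] assms(2)]) simp
  then obtain M where M: "\<forall>y\<in>iter_dderiv f vs ` S. norm y \<le> M"
    using compact_imp_bounded bounded_iff by metis
  have "\<bar>iter_dderiv f vs z\<bar> \<le> max M 0" for z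
  proof (cases "z \<in> S")
    case True then show ?thesis using M by force
  next
    case False then show ?thesis
      using iter_zero_outside[OF compact_imp_closed[OF assms(2)] assms(3) False] by simp
  qed
  then show ?thesis by blast
qed

lemma iter_meas:
  fixes f :: "'a::euclidean_space \<Rightarrow> real"
  assumes "smooth_on UNIV f"
  shows "iter_dderiv f vs \<in> borel_measurable lborel"
  using borel_measurable_continuous_onI[OF iter_cont[OF assms]] by simp

lemma ind_int:
  fixes A :: "'a::euclidean_space set"
  assumes "A \<in> sets lborel" "bounded A"
  shows "integrable lborel (indicator A :: 'a \<Rightarrow> real)"
  using assms emeasure_bounded_finite integrable_real_indicator by blast

lemma int_bound:
  fixes f :: "'a::euclidean_space \<Rightarrow> real"
  assumes "f \<in> borel_measurable lborel" "B \<in> sets lborel" "bounded B"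
    "AE z in lborel. \<bar>f z\<bar> \<le> M * indicator B z"
  shows "integrable lborel f"
proof (rule Bochner_Integration.integrable_bound[OF _ assms(1)])
  show "integrable lborel (\<lambda>z. M * indicator B z)"
    using ind_int[OF assms(2,3)] by simp
  show "AE x in lborel. norm (f x) \<le> norm (M * indicator B x)"
    using assms(4) by (rule eventually_mono) auto
qed

lemma powr_bound:
  fixes x k :: real
  assumes "0 \<le> x" "x \<le> 1" "0 < k"
  shows "\<bar>x powr k * (1 - x)\<bar> \<le> 1 / k"
proof (cases "x = 0")
  case True then show ?thesis using assms by simp
next
  case False
  then have xp: "0 < x" using assms by simp
  define y where "y = 1 - x"
  have y0: "0 \<le> y" using assms y_def by simp
  have "x powr k = exp (k * ln x)" using xp by (simp add: powr_def)
  also have "\<dots> \<le> exp (- (k * y))"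
  proof -
    have "k * ln x \<le> k * (x - 1)" using ln_le_minus_one[OF xp] assms(3) by (simp add: mult_left_mono)
    moreover have "k * y = k - k * x" unfolding y_def by (simp add: right_diff_distrib)
    ultimately show ?thesis by (simp add: right_diff_distrib)
  qed
  finally have h1: "x powr k \<le> exp (- (k * y))" .
  have h2: "k * y \<le> exp (k * y)" using exp_ge_add_one_self[of "k*y"] by linarith
  have "x powr k * y \<le> exp (- (k * y)) * y" using h1 y0 by (simp add: mult_right_mono)
  also have "\<dots> = (k * y / exp (k * y)) / k" using assms(3) by (simp add: exp_minus field_simps)
  also have "\<dots> \<le> 1 / k" using h2 assms(3) by (simp add: field_simps)
  finally have "x powr k * y \<le> 1 / k" .
  moreover have "0 \<le> x powr k * y" using y0 by simp
  ultimately show ?thesis using y_def by simp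
qed

lemma sign_lemma:
  fixes f :: "'a::euclidean_space \<Rightarrow> real"
  assumes fm: "f \<in> borel_measurable lborel" and Sm: "S \<in> sets lborel"
    and bd: "AE z in lborel. z \<in> S \<longrightarrow> \<bar>f z\<bar> \<le> C"
    and hyp: "\<And>A. A \<in> sets lborel \<Longrightarrow> A \<subseteq> S \<Longrightarrow> bounded A \<Longrightarrow> (\<integral>z. indicator A z * f z \<partial>lborel) \<le> 0"
  shows "AE z in lborel. z \<in> S \<longrightarrow> f z \<le> 0"
proof -
  have each: "AE z in lborel. z \<notin> S \<inter> cball 0 (real n) \<inter> {z. f z > 0}" for n
  proof -
    define A where "A = S \<inter> cball 0 (real n) \<inter> {z. f z > 0}"
    have Am: "A \<in> sets lborel" unfolding A_def using Sm fm by measurable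
    have Ab: "bounded A" unfolding A_def by (meson bounded_Int bounded_cball)
    have int: "integrable lborel (\<lambda>z. indicator A z * f z)"
    proof (rule int_bound[OF _ Am Ab, of _ C])
      show "(\<lambda>z. indicator A z * f z) \<in> borel_measurable lborel" using Am fm by measurable
      show "AE z in lborel. \<bar>indicator A z * f z\<bar> \<le> C * indicator A z"
        using bd by (rule eventually_mono) (auto simp: A_def indicator_def)
    qed
    have nn: "AE z in lborel. 0 \<le> indicator A z * f z" by (auto simp: A_def indicator_def)
    have "(\<integral>z. indicator A z * f z \<partial>lborel) \<le> 0" using hyp[OF Am _ Ab] A_def by auto
    moreover have "(\<integral>z. indicator A z * f z \<partial>lborel) \<ge> 0" using nn by (simp add: integral_nonneg_AE)
    ultimately have "(\<integral>z. indicator A z * f z \<partial>lborel) = 0" by simp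
    then have "AE z in lborel. indicator A z * f z = 0"
      using integral_nonneg_eq_0_iff_AE[OF int nn] by simp
    then show ?thesis by (rule eventually_mono) (auto simp: A_def indicator_def)
  qed
  have "AE z in lborel. \<forall>n::nat. z \<notin> S \<inter> cball 0 (real n) \<inter> {z. f z > 0}"
    unfolding AE_all_countable using each by blast
  then show ?thesis
  proof (rule eventually_mono)
    fix z assume h: "\<forall>n::nat. z \<notin> S \<inter> cball 0 (real n) \<inter> {z. f z > 0}"
    obtain n :: nat where "norm z \<le> real n" using real_arch_simple by blast
    then show "z \<in> S \<longrightarrow> f z \<le> 0" using h[rule_format, of n] by (auto simp: dist_norm)
  qed
qed

lemma cont_bounded:
  fixes g :: "'a::euclidean_space \<Rightarrow> real"
  assumes c: "continuous_on UNIV g" and S: "compact S" and z: "\<And>z. z \<notin> S \<Longrightarrow> g z = 0"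
  shows "\<exists>M\<ge>0. \<forall>z. \<bar>g z\<bar> \<le> M"
proof -
  have "compact (g ` S)"
    by (rule compact_continuous_image[OF continuous_on_subset[OF c] S]) simp
  then obtain M where M: "\<forall>y\<in>g ` S. norm y \<le> M"
    using compact_imp_bounded bounded_iff by metis
  have "\<bar>g z\<bar> \<le> max M 0" for z
  proof (cases "z \<in> S")
    case True then show ?thesis using M by force
  next
    case False then show ?thesis using z[OF False] by simp
  qed
  then show ?thesis by (intro exI[of _ "max M 0"]) auto
qed

lemma ind_sub: "A \<subseteq> B \<Longrightarrow> indicator B z * (indicator A z :: real) = indicator A z"
  by (auto simp: indicator_def)

lemma abs_mult_le: "\<bar>a\<bar> \<le> A \<Longrightarrow> \<bar>b\<bar> \<le> B \<Longrightarrow> \<bar>a * b\<bar> \<le> A * (B::real)"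
  unfolding abs_mult by (rule mult_mono) (auto intro: order_trans[OF abs_ge_zero])



lemma QT_meas: "QT T \<in> sets (lborel :: (real \<times> (real^'d::finite)) measure)"
  unfolding QT_def by (simp add: closed_Times)

lemma keyE:
  fixes rho :: "nat \<Rightarrow> real \<times> (real^'d::finite) \<Rightarrow> real" and r :: "real \<times> (real^'d) \<Rightarrow> real"
  assumes T: "T > 0"
    and rm: "\<And>j. rho j \<in> borel_measurable lborel" and r_meas: "r \<in> borel_measurable lborel"
    and rho_conv: "\<forall>K::(real^'d) set. compact K \<longrightarrow>
        (\<lambda>j. SUP t\<in>{0..T}. \<integral>\<^sup>+ x\<in>K. ennreal \<bar>rho j (t, x) - r (t, x)\<bar> \<partial>lborel)
          \<longlonglongrightarrow> 0"
  shows "(\<lambda>j. \<integral>\<^sup>+z. ennreal \<bar>rho j z - r z\<bar> * indicator ({0..T} \<times> cball 0 (real n)) z \<partial>lborel) \<longlonglongrightarrow> 0"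
proof -
  define S where "S j = (SUP t\<in>{0..T}. \<integral>\<^sup>+ x\<in>cball 0 (real n). ennreal \<bar>rho j (t, x) - r (t, x)\<bar> \<partial>lborel)" for j
  have S0: "S \<longlonglongrightarrow> 0" unfolding S_def using rho_conv by simp
  have le: "(\<integral>\<^sup>+z. ennreal \<bar>rho j z - r z\<bar> * indicator ({0..T} \<times> cball 0 (real n)) z \<partial>lborel)
        \<le> ennreal T * S j" for j
  proof -
    let ?f = "\<lambda>z. ennreal \<bar>rho j z - r z\<bar> * indicator ({0..T} \<times> cball 0 (real n)) z"
    have Km: "{0..T} \<times> cball 0 (real n) \<in> sets (lborel :: (real \<times> (real^'d)) measure)"
      by (simp add: closed_Times)
    have "?f \<in> borel_measurable lborel"
      by (intro borel_measurable_times_ennreal measurable_compose[OF _ measurable_ennreal]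
            borel_measurable_abs borel_measurable_diff rm r_meas borel_measurable_indicator Km)
    then have fm: "?f \<in> borel_measurable (lborel \<Otimes>\<^sub>M lborel)"
      unfolding lborel_prod .
    have "(\<integral>\<^sup>+z. ?f z \<partial>lborel) = (\<integral>\<^sup>+t. \<integral>\<^sup>+x. ?f (t, x) \<partial>lborel \<partial>lborel)"
      using lborel.nn_integral_fst[OF fm] by (simp add: lborel_prod)
    also have "\<dots> \<le> (\<integral>\<^sup>+t. S j * indicator {0..T} t \<partial>lborel)"
    proof (rule nn_integral_mono)
      fix t
      show "(\<integral>\<^sup>+x. ?f (t, x) \<partial>lborel) \<le> S j * indicator {0..T} t"
      proof (cases "t \<in> {0..T}")
        case True
        have "(\<integral>\<^sup>+x. ?f (t, x) \<partial>lborel) = (\<integral>\<^sup>+ x\<in>cball 0 (real n). ennreal \<bar>rho j (t, x) - r (t, x)\<bar> \<partial>lborel)"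
          using True by (intro nn_integral_cong) (auto simp: indicator_def)
        also have "\<dots> \<le> S j" unfolding S_def using True by (rule SUP_upper)
        finally show ?thesis using True by simp
      next
        case False
        have e: "(\<lambda>x. ?f (t, x)) = (\<lambda>x. 0)" using False by (auto simp: indicator_def)
        have "(\<integral>\<^sup>+x. ?f (t, x) \<partial>lborel) = 0" unfolding e by simp
        then show ?thesis by simp
      qed
    qed
    also have "\<dots> = S j * ennreal T"
      using T by (simp add: nn_integral_cmult_indicator)
    finally show ?thesis by (simp add: mult.commute)
  qed
  have "(\<lambda>j. ennreal T * S j) \<longlonglongrightarrow> ennreal T * 0"
    by (rule ennreal_tendsto_cmult[OF _ S0]) simp
  then have lim: "(\<lambda>j. ennreal T * S j) \<longlonglongrightarrow> 0" by simp
  show ?thesis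
    by (rule tendsto_sandwich[OF _ _ tendsto_const lim]) (use le in auto)
qed

lemma keyC:
  fixes rho :: "nat \<Rightarrow> real \<times> (real^'d::finite) \<Rightarrow> real" and r :: "real \<times> (real^'d) \<Rightarrow> real"
    and H :: "nat \<Rightarrow> real \<times> (real^'d) \<Rightarrow> real"
  assumes T: "T > 0"
    and rm: "\<And>j. rho j \<in> borel_measurable lborel" and r_meas: "r \<in> borel_measurable lborel"
    and rho_conv: "\<forall>K::(real^'d) set. compact K \<longrightarrow>
        (\<lambda>j. SUP t\<in>{0..T}. \<integral>\<^sup>+ x\<in>K. ennreal \<bar>rho j (t, x) - r (t, x)\<bar> \<partial>lborel)
          \<longlonglongrightarrow> 0"
    and M: "0 \<le> M"
    and Hb: "\<And>j. AE z in lborel. \<bar>H j z\<bar> \<le> M * (\<bar>rho j z - r z\<bar> * indicator ({0..T} \<times> cball 0 (real n)) z)"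
  shows "(\<lambda>j. \<integral>z. H j z \<partial>lborel) \<longlonglongrightarrow> 0"
proof -
  define E where "E j = (\<integral>\<^sup>+z. ennreal \<bar>rho j z - r z\<bar> * indicator ({0..T} \<times> cball 0 (real n)) z \<partial>lborel)" for j
  have E0: "E \<longlonglongrightarrow> 0" unfolding E_def by (rule keyE[OF T rm r_meas rho_conv])
  have Km: "{0..T} \<times> cball 0 (real n) \<in> sets (lborel :: (real \<times> (real^'d)) measure)"
    by (simp add: closed_Times)
  have b: "ennreal \<bar>\<integral>z. H j z \<partial>lborel\<bar> \<le> ennreal M * E j" for j
  proof (cases "integrable lborel (H j)")
    case True
    have "ennreal \<bar>\<integral>z. H j z \<partial>lborel\<bar> \<le> (\<integral>\<^sup>+z. ennreal (norm (H j z)) \<partial>lborel)"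
      using integral_norm_bound_ennreal[OF True] by simp
    also have "\<dots> \<le> (\<integral>\<^sup>+z. ennreal M * (ennreal \<bar>rho j z - r z\<bar> * indicator ({0..T} \<times> cball 0 (real n)) z) \<partial>lborel)"
    proof (rule nn_integral_mono_AE)
      show "AE z in lborel. ennreal (norm (H j z)) \<le> ennreal M * (ennreal \<bar>rho j z - r z\<bar> * indicator ({0..T} \<times> cball 0 (real n)) z)"
        using Hb[of j]
      proof (rule eventually_mono)
        fix z assume h: "\<bar>H j z\<bar> \<le> M * (\<bar>rho j z - r z\<bar> * indicator ({0..T} \<times> cball 0 (real n)) z)"
        have "ennreal (norm (H j z)) \<le> ennreal (M * (\<bar>rho j z - r z\<bar> * indicator ({0..T} \<times> cball 0 (real n)) z))"
          using h by (simp add: ennreal_leI)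
        also have "\<dots> = ennreal M * (ennreal \<bar>rho j z - r z\<bar> * indicator ({0..T} \<times> cball 0 (real n)) z)"
          using M by (simp add: ennreal_mult indicator_def)
        finally show "ennreal (norm (H j z)) \<le> ennreal M * (ennreal \<bar>rho j z - r z\<bar> * indicator ({0..T} \<times> cball 0 (real n)) z)" .
      qed
    qed
    also have "\<dots> = ennreal M * E j"
      unfolding E_def
      by (rule nn_integral_cmult)
        (intro borel_measurable_times_ennreal measurable_compose[OF _ measurable_ennreal]
            borel_measurable_abs borel_measurable_diff rm r_meas borel_measurable_indicator Km)
    finally show ?thesis .
  next
    case False then show ?thesis by (simp add: not_integrable_integral_eq)
  qed
  have "(\<lambda>j. ennreal M * E j) \<longlonglongrightarrow> ennreal M * 0"
    by (rule ennreal_tendsto_cmult[OF _ E0]) simp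
  then have lim: "(\<lambda>j. ennreal M * E j) \<longlonglongrightarrow> 0" by simp
  have "(\<lambda>j. ennreal \<bar>\<integral>z. H j z \<partial>lborel\<bar>) \<longlonglongrightarrow> 0"
    by (rule tendsto_sandwich[OF _ _ tendsto_const lim]) (use b in auto)
  then have "(\<lambda>j. \<bar>\<integral>z. H j z \<partial>lborel\<bar>) \<longlonglongrightarrow> 0"
    by (subst (asm) ennreal_tendsto_0_iff) auto
  then show ?thesis by (simp add: tendsto_rabs_zero_iff)
qed

theorem mainTheorem4:
  fixes U :: "real^'d::finite \<Rightarrow> real^'d"
    and rho0 :: "real^'d \<Rightarrow> real"
    and T :: real
    and k eps :: "nat \<Rightarrow> real"
    and rho :: "nat \<Rightarrow> real \<times> (real^'d) \<Rightarrow> real"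
    and r p :: "real \<times> (real^'d) \<Rightarrow> real"
  assumes T_pos: "T > 0"
    and U_W2inf: "W2inf U"
    and rho0_int: "integrable lborel rho0"
    and rho0_bounds: "AE x in lborel. 0 \<le> rho0 x \<and> rho0 x \<le> 1"
    and rho0_BV: "BV rho0"
    and rho0_mass: "(\<integral>x. rho0 x \<partial>lborel) = 1"
    and DSU: "DSU_nonpos U"
    and k_pos: "\<forall>j. k j > 0"
    and k_lim: "filterlim k at_top sequentially"
    and eps_lim: "eps \<longlonglongrightarrow> 0"
    and eps_bounds: "\<forall>j. 0 < eps j \<and> eps j \<le> 1"
    and sol: "\<forall>j. parabolic_sol U rho0 T (k j) (eps j) (rho j)"
    and r_meas: "r \<in> borel_measurable lborel"
    and r_L1loc: "\<forall>t\<in>{0..T}. \<forall>K. compact K \<longrightarrow> set_integrable lborel K (\<lambda>x. r (t, x))"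
    and rho_conv: "\<forall>K::(real^'d) set. compact K \<longrightarrow>
        (\<lambda>j. SUP t\<in>{0..T}. \<integral>\<^sup>+ x\<in>K. ennreal \<bar>rho j (t, x) - r (t, x)\<bar> \<partial>lborel)
          \<longlonglongrightarrow> 0"
    and p_Linf: "Linf (QT T) p"
    and p_conv: "\<forall>g. set_integrable lborel (QT T) g \<longrightarrow>
        (\<lambda>j. LINT z:QT T|lborel. (rho j z powr k j) * g z)
          \<longlonglongrightarrow> (LINT z:QT T|lborel. p z * g z)"
  shows "(AE z in lborel. z \<in> QT T \<longrightarrow> 0 \<le> r z \<and> r z \<le> 1)
       \<and> (AE z in lborel. z \<in> QT T \<longrightarrow> 0 \<le> p z \<and> p z \<le> 1)
       \<and> (\<forall>\<phi>. test_fun ({0<..<T} \<times> UNIV) \<phi> \<longrightarrow>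
            (LINT z:QT T|lborel. r z * dt \<phi> z + r z * (1 - p z) * (U (snd z) \<bullet> grad_x \<phi> z)) = 0)
       \<and> (AE z in lborel. z \<in> QT T \<longrightarrow> p z * (1 - r z) = 0)"
proof -
  have par: "\<And>j. parabolic_sol U rho0 T (k j) (eps j) (rho j)" using sol by blast
  have rm: "\<And>j. rho j \<in> borel_measurable lborel" using par unfolding parabolic_sol_def Linf_def by blast
  have rb: "\<And>j z. z \<in> QT T \<Longrightarrow> 0 \<le> rho j z \<and> rho j z \<le> 1" using par unfolding parabolic_sol_def by blast
  have QTm: "QT T \<in> sets (lborel :: (real \<times> (real^'d)) measure)" by (rule QT_meas)
  define K where "K n = {0..T} \<times> cball (0::real^'d) (real n)" for n :: nat
  have Km: "K n \<in> sets lborel" for n unfolding K_def by (simp add: closed_Times)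
  have Kb: "bounded (K n)" for n unfolding K_def by (simp add: bounded_Times)
  have KQ: "K n \<subseteq> QT T" for n unfolding K_def QT_def by auto
  have Kex: "\<exists>n. A \<subseteq> K n" if "bounded A" "A \<subseteq> QT T" for A
  proof -
    obtain R where R: "\<forall>z\<in>A. norm z \<le> R" using \<open>bounded A\<close> bounded_iff by metis
    obtain n :: nat where "R \<le> real n" using real_arch_simple by blast
    then have "A \<subseteq> K n" using R that(2) unfolding K_def QT_def
      by (auto simp: dist_norm) (metis norm_snd_le order_trans snd_conv)
    then show ?thesis by blast
  qed
  note C = keyC[OF T_pos rm r_meas rho_conv]
  note E = keyE[OF T_pos rm r_meas rho_conv]
  have sli: "set_lebesgue_integral lborel (QT T) f = (\<integral>z. indicator (QT T) z * f z \<partial>lborel)" for f :: "real \<times> (real^'d) \<Rightarrow> real"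
    by (simp add: set_lebesgue_integral_def)
  have sint: "set_integrable lborel (QT T) g \<longleftrightarrow> integrable lborel (\<lambda>z. indicator (QT T) z * g z)" for g :: "real \<times> (real^'d) \<Rightarrow> real"
    by (simp add: set_integrable_def)

  have rK: "AE z in lborel. z \<in> K n \<longrightarrow> 0 \<le> r z \<and> r z \<le> 1" for n
  proof -
    let ?d = "\<lambda>z. ennreal (max (- r z) (r z - 1)) * indicator (K n) z"
    have dm: "?d \<in> borel_measurable lborel" using r_meas Km by measurable
    have le: "(\<integral>\<^sup>+z. ?d z \<partial>lborel) \<le> (\<integral>\<^sup>+z. ennreal \<bar>rho j z - r z\<bar> * indicator (K n) z \<partial>lborel)" for j
    proof (rule nn_integral_mono)
      fix z
      show "?d z \<le> ennreal \<bar>rho j z - r z\<bar> * indicator (K n) z"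
      proof (cases "z \<in> K n")
        case True
        then have "0 \<le> rho j z \<and> rho j z \<le> 1" using rb KQ by blast
        then have "max (- r z) (r z - 1) \<le> \<bar>rho j z - r z\<bar>" by linarith
        then show ?thesis using True by (simp add: ennreal_leI)
      qed simp
    qed
    have "(\<integral>\<^sup>+z. ?d z \<partial>lborel) \<le> 0"
      by (rule LIMSEQ_le_const[OF E[of n, folded K_def]]) (use le in blast)
    then have "(\<integral>\<^sup>+z. ?d z \<partial>lborel) = 0" by simp
    then have "AE z in lborel. ?d z = 0" using nn_integral_0_iff_AE[OF dm] by simp
    then show ?thesis
      by (rule eventually_mono) (auto simp: indicator_def ennreal_eq_0_iff split: if_splits)
  qed
  have rQ: "AE z in lborel. z \<in> QT T \<longrightarrow> 0 \<le> r z \<and> r z \<le> 1"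
  proof -
    have "AE z in lborel. \<forall>n. z \<in> K n \<longrightarrow> 0 \<le> r z \<and> r z \<le> 1"
      unfolding AE_all_countable using rK by blast
    then show ?thesis
    proof (rule eventually_mono)
      fix z :: "real \<times> (real^'d)" assume h: "\<forall>n. z \<in> K n \<longrightarrow> 0 \<le> r z \<and> r z \<le> 1"
      obtain n :: nat where "norm (snd z) \<le> real n" using real_arch_simple by blast
      then have "z \<in> QT T \<Longrightarrow> z \<in> K n" unfolding K_def QT_def
        by (cases z) auto
      then show "z \<in> QT T \<longrightarrow> 0 \<le> r z \<and> r z \<le> 1" using h by blast
    qed
  qed

  obtain Cp0 where Cp0: "AE z in lborel. z \<in> QT T \<longrightarrow> \<bar>p z\<bar> \<le> Cp0" and pm: "p \<in> borel_measurable lborel"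
    using p_Linf unfolding Linf_def by blast
  define Cp where "Cp = \<bar>Cp0\<bar>"
  have Cp: "AE z in lborel. z \<in> QT T \<longrightarrow> \<bar>p z\<bar> \<le> Cp" using Cp0 unfolding Cp_def
    by (rule eventually_mono) auto
  have Cp_nn: "0 \<le> Cp" unfolding Cp_def by simp
  have powr_m: "(\<lambda>z. rho j z powr k j) \<in> borel_measurable lborel" for j
    using rm[of j] by measurable
  have pow_b: "0 \<le> rho j z powr k j \<and> rho j z powr k j \<le> 1" if "z \<in> QT T" for j z
  proof -
    have "0 \<le> k j" using k_pos by (simp add: less_imp_le)
    moreover have "\<bar>rho j z\<bar> \<le> 1" using rb[OF that, of j] by simp
    ultimately show ?thesis using powr_le1 by simp
  qed
  have limA: "(\<lambda>j. \<integral>z. indicator A z * rho j z powr k j \<partial>lborel) \<longlonglongrightarrow> (\<integral>z. indicator A z * p z \<partial>lborel)"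
    if A: "A \<in> sets lborel" "A \<subseteq> QT T" "bounded A" for A
  proof -
    have "set_integrable lborel (QT T) (indicator A :: _ \<Rightarrow> real)"
      using ind_int[OF A(1,3)] by (simp add: set_integrable_def ind_sub[OF A(2)])
    then have "(\<lambda>j. LINT z:QT T|lborel. (rho j z powr k j) * indicator A z)
          \<longlonglongrightarrow> (LINT z:QT T|lborel. p z * indicator A z)" using p_conv by blast
    moreover have "(LINT z:QT T|lborel. f z * indicator A z) = (\<integral>z. indicator A z * f z \<partial>lborel)" for f :: "real \<times> (real^'d) \<Rightarrow> real"
      unfolding set_lebesgue_integral_def using A(2) by (intro Bochner_Integration.integral_cong) (auto simp: indicator_def)
    ultimately show ?thesis by simp
  qed
  have pA_int: "integrable lborel (\<lambda>z. indicator A z * p z)"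
    if A: "A \<in> sets lborel" "A \<subseteq> QT T" "bounded A" for A
  proof (rule int_bound[OF _ A(1,3), of _ Cp])
    show "(\<lambda>z. indicator A z * p z) \<in> borel_measurable lborel" using A(1) pm by measurable
    show "AE z in lborel. \<bar>indicator A z * p z\<bar> \<le> Cp * indicator A z"
      using Cp by (rule eventually_mono) (use A(2) Cp_nn in \<open>auto simp: indicator_def\<close>)
  qed
  have p0: "AE z in lborel. z \<in> QT T \<longrightarrow> - p z \<le> 0"
  proof (rule sign_lemma[of "\<lambda>z. - p z" _ Cp])
    show "(\<lambda>z. - p z) \<in> borel_measurable lborel" using pm by measurable
    show "QT T \<in> sets (lborel :: (real \<times> (real^'d)) measure)" by (rule QTm)
    show "AE z in lborel. z \<in> QT T \<longrightarrow> \<bar>- p z\<bar> \<le> Cp" using Cp by simp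
    fix A :: "(real \<times> (real^'d)) set" assume A: "A \<in> sets lborel" "A \<subseteq> QT T" "bounded A"
    have "0 \<le> (\<integral>z. indicator A z * p z \<partial>lborel)"
    proof (rule LIMSEQ_le_const[OF limA[OF A]], intro exI allI impI)
      fix j :: nat
      show "0 \<le> (\<integral>z. indicator A z * rho j z powr k j \<partial>lborel)"
        by (rule Bochner_Integration.integral_nonneg) (simp add: indicator_def)
    qed
    then show "(\<integral>z. indicator A z * - p z \<partial>lborel) \<le> 0" by simp
  qed
  have p1: "AE z in lborel. z \<in> QT T \<longrightarrow> p z - 1 \<le> 0"
  proof (rule sign_lemma[of "\<lambda>z. p z - 1" _ "Cp + 1"])
    show "(\<lambda>z. p z - 1) \<in> borel_measurable lborel" using pm by measurable
    show "QT T \<in> sets (lborel :: (real \<times> (real^'d)) measure)" by (rule QTm)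
    show "AE z in lborel. z \<in> QT T \<longrightarrow> \<bar>p z - 1\<bar> \<le> Cp + 1" using Cp by (rule eventually_mono) auto
    fix A :: "(real \<times> (real^'d)) set" assume A: "A \<in> sets lborel" "A \<subseteq> QT T" "bounded A"
    have "(\<integral>z. indicator A z * p z \<partial>lborel) \<le> (\<integral>z. indicator A z \<partial>lborel)"
    proof (rule LIMSEQ_le_const2[OF limA[OF A]], intro exI allI impI)
      fix j :: nat
      show "(\<integral>z. indicator A z * rho j z powr k j \<partial>lborel) \<le> (\<integral>z. indicator A z \<partial>lborel)"
      proof (rule Bochner_Integration.integral_mono)
        show "integrable lborel (\<lambda>z. indicator A z :: real)" by (rule ind_int[OF A(1,3)])
        show "integrable lborel (\<lambda>z. indicator A z * rho j z powr k j)"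
        proof (rule int_bound[OF _ A(1,3), of _ 1])
          show "(\<lambda>z. indicator A z * rho j z powr k j) \<in> borel_measurable lborel"
            using A(1) powr_m by measurable
          show "AE z in lborel. \<bar>indicator A z * rho j z powr k j\<bar> \<le> 1 * indicator A z"
            using pow_b A(2) by (intro AE_I2) (auto simp: indicator_def)
        qed
        fix z show "indicator A z * rho j z powr k j \<le> indicator A z"
          using pow_b[of z j] A(2) by (auto simp: indicator_def)
      qed
    qed
    moreover have "(\<integral>z. indicator A z * (p z - 1) \<partial>lborel) = (\<integral>z. indicator A z * p z \<partial>lborel) - (\<integral>z. indicator A z \<partial>lborel)"
      using Bochner_Integration.integral_diff[OF pA_int[OF A] ind_int[OF A(1,3)]]
      by (simp add: right_diff_distrib)
    ultimately show "(\<integral>z. indicator A z * (p z - 1) \<partial>lborel) \<le> 0" by simp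
  qed
  have pQ: "AE z in lborel. z \<in> QT T \<longrightarrow> 0 \<le> p z \<and> p z \<le> 1"
    using p0 p1 by eventually_elim auto

  have Z: "(\<integral>z. indicator A z * (p z * (1 - r z)) \<partial>lborel) = 0"
    if A: "A \<in> sets lborel" "A \<subseteq> QT T" "bounded A" for A
  proof -
    obtain n where AK: "A \<subseteq> K n" using Kex[OF A(3,2)] by blast
    define g where "g z = indicator A z * (1 - r z)" for z
    have gm: "g \<in> borel_measurable lborel" unfolding g_def using A(1) r_meas by measurable
    have gi: "integrable lborel (\<lambda>z. indicator (QT T) z * g z)"
    proof (rule int_bound[OF _ A(1,3), of _ 1])
      show "(\<lambda>z. indicator (QT T) z * g z) \<in> borel_measurable lborel" using QTm gm by measurable
      show "AE z in lborel. \<bar>indicator (QT T) z * g z\<bar> \<le> 1 * indicator A z"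
        using rQ by (rule eventually_mono) (use A(2) in \<open>auto simp: g_def indicator_def\<close>)
    qed
    have "(\<lambda>j. LINT z:QT T|lborel. (rho j z powr k j) * g z) \<longlonglongrightarrow> (LINT z:QT T|lborel. p z * g z)"
      using p_conv gi unfolding sint by blast
    moreover have "(LINT z:QT T|lborel. p z * g z) = (\<integral>z. indicator A z * (p z * (1 - r z)) \<partial>lborel)"
      unfolding sli g_def using A(2) by (intro Bochner_Integration.integral_cong) (auto simp: indicator_def)
    ultimately have X: "(\<lambda>j. \<integral>z. indicator (QT T) z * (rho j z powr k j * g z) \<partial>lborel)
        \<longlonglongrightarrow> (\<integral>z. indicator A z * (p z * (1 - r z)) \<partial>lborel)"
      unfolding sli by simp
    define Y where "Y j = (\<integral>z. indicator A z * (rho j z powr k j * (1 - rho j z)) \<partial>lborel)" for j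
    have Xi: "integrable lborel (\<lambda>z. indicator (QT T) z * (rho j z powr k j * g z))" for j
    proof (rule int_bound[OF _ A(1,3), of _ 1])
      show "(\<lambda>z. indicator (QT T) z * (rho j z powr k j * g z)) \<in> borel_measurable lborel"
        using QTm gm powr_m by measurable
      show "AE z in lborel. \<bar>indicator (QT T) z * (rho j z powr k j * g z)\<bar> \<le> 1 * indicator A z"
        using rQ
      proof (rule eventually_mono)
        fix z assume h: "z \<in> QT T \<longrightarrow> 0 \<le> r z \<and> r z \<le> 1"
        show "\<bar>indicator (QT T) z * (rho j z powr k j * g z)\<bar> \<le> 1 * indicator A z"
        proof (cases "z \<in> A")
          case True
          then have "z \<in> QT T" using A(2) by blast
          then have "0 \<le> rho j z powr k j" "rho j z powr k j \<le> 1" "\<bar>1 - r z\<bar> \<le> 1"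
            using pow_b[of z j] h by auto
          then have "\<bar>rho j z powr k j * (1 - r z)\<bar> \<le> 1 * 1"
            unfolding abs_mult by (intro mult_mono) auto
          then show ?thesis using True \<open>z \<in> QT T\<close> by (simp add: g_def)
        qed (simp add: g_def)
      qed
    qed
    have Yi: "integrable lborel (\<lambda>z. indicator A z * (rho j z powr k j * (1 - rho j z)))" for j
    proof (rule int_bound[OF _ A(1,3), of _ 1])
      show "(\<lambda>z. indicator A z * (rho j z powr k j * (1 - rho j z))) \<in> borel_measurable lborel"
        using A(1) rm powr_m by measurable
      show "AE z in lborel. \<bar>indicator A z * (rho j z powr k j * (1 - rho j z))\<bar> \<le> 1 * indicator A z"
      proof (intro AE_I2)
        fix z
        show "\<bar>indicator A z * (rho j z powr k j * (1 - rho j z))\<bar> \<le> 1 * indicator A z"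
        proof (cases "z \<in> A")
          case True
          then have "z \<in> QT T" using A(2) by blast
          then have "0 \<le> rho j z powr k j" "rho j z powr k j \<le> 1" "\<bar>1 - rho j z\<bar> \<le> 1"
            using pow_b[of z j] rb[of z j] by auto
          then have "\<bar>rho j z powr k j * (1 - rho j z)\<bar> \<le> 1 * 1"
            unfolding abs_mult by (intro mult_mono) auto
          then show ?thesis using True by simp
        qed simp
      qed
    qed
    have D: "(\<lambda>j. \<integral>z. indicator (QT T) z * (rho j z powr k j * g z) - indicator A z * (rho j z powr k j * (1 - rho j z)) \<partial>lborel) \<longlonglongrightarrow> 0"
    proof (rule C[of 1 _ n, folded K_def])
      fix j
      show "AE z in lborel. \<bar>indicator (QT T) z * (rho j z powr k j * g z) - indicator A z * (rho j z powr k j * (1 - rho j z))\<bar>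
          \<le> 1 * (\<bar>rho j z - r z\<bar> * indicator (K n) z)"
      proof (intro AE_I2)
        fix z
        show "\<bar>indicator (QT T) z * (rho j z powr k j * g z) - indicator A z * (rho j z powr k j * (1 - rho j z))\<bar>
          \<le> 1 * (\<bar>rho j z - r z\<bar> * indicator (K n) z)"
        proof (cases "z \<in> A")
          case True
          then have "z \<in> QT T" "z \<in> K n" using A(2) AK by blast+
          then have b: "0 \<le> rho j z powr k j" "rho j z powr k j \<le> 1"
            using pow_b[of z j] by auto
          have "indicator (QT T) z * (rho j z powr k j * g z) - indicator A z * (rho j z powr k j * (1 - rho j z))
              = rho j z powr k j * (rho j z - r z)"
            using True \<open>z \<in> QT T\<close> by (simp add: g_def right_diff_distrib)
          also have "\<bar>\<dots>\<bar> \<le> 1 * \<bar>rho j z - r z\<bar>"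
            unfolding abs_mult using b by (intro mult_right_mono) auto
          finally show ?thesis using \<open>z \<in> K n\<close> by simp
        qed (simp add: g_def)
      qed
    qed simp
    have D': "(\<lambda>j. (\<integral>z. indicator (QT T) z * (rho j z powr k j * g z) \<partial>lborel) - Y j) \<longlonglongrightarrow> 0"
      using D unfolding Y_def by (subst (asm) Bochner_Integration.integral_diff[OF Xi Yi]) simp
    have Yb: "\<bar>Y j\<bar> \<le> inverse (k j) * (\<integral>z. indicator A z \<partial>lborel)" for j
    proof -
      have "\<bar>Y j\<bar> \<le> (\<integral>z. \<bar>indicator A z * (rho j z powr k j * (1 - rho j z))\<bar> \<partial>lborel)"
        unfolding Y_def using integral_norm_bound[of lborel "\<lambda>z. indicator A z * (rho j z powr k j * (1 - rho j z))"]
        by (simp only: real_norm_def)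
      also have "\<dots> \<le> (\<integral>z. inverse (k j) * indicator A z \<partial>lborel)"
      proof (rule Bochner_Integration.integral_mono)
        show "integrable lborel (\<lambda>z. \<bar>indicator A z * (rho j z powr k j * (1 - rho j z))\<bar>)"
          using Yi by (rule integrable_abs)
        show "integrable lborel (\<lambda>z. inverse (k j) * indicator A z)"
          using ind_int[OF A(1,3)] by simp
        fix z
        show "\<bar>indicator A z * (rho j z powr k j * (1 - rho j z))\<bar> \<le> inverse (k j) * indicator A z"
        proof (cases "z \<in> A")
          case True
          then have "z \<in> QT T" using A(2) by blast
          then have "\<bar>rho j z powr k j * (1 - rho j z)\<bar> \<le> 1 / k j"
            using powr_bound[of "rho j z" "k j"] rb[of z j] k_pos by blast
          then show ?thesis using True by (simp add: divide_inverse)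
        qed simp
      qed
      also have "\<dots> = inverse (k j) * (\<integral>z. indicator A z \<partial>lborel)" by simp
      finally show ?thesis .
    qed
    have "(\<lambda>j. inverse (k j) * (\<integral>z. indicator A z \<partial>lborel)) \<longlonglongrightarrow> 0 * (\<integral>z. indicator A z \<partial>lborel)"
      by (intro tendsto_mult tendsto_const tendsto_inverse_0_at_top k_lim)
    then have limY: "(\<lambda>j. inverse (k j) * (\<integral>z. indicator A z \<partial>lborel)) \<longlonglongrightarrow> 0" by simp
    have "(\<lambda>j. \<bar>Y j\<bar>) \<longlonglongrightarrow> 0"
      by (rule tendsto_sandwich[OF _ _ tendsto_const limY]) (use Yb in \<open>simp_all only: abs_ge_zero eventually_True\<close>)
    then have Y0: "Y \<longlonglongrightarrow> 0" by (simp add: tendsto_rabs_zero_iff)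
    have "(\<lambda>j. ((\<integral>z. indicator (QT T) z * (rho j z powr k j * g z) \<partial>lborel) - Y j) + Y j) \<longlonglongrightarrow> 0 + 0"
      by (intro tendsto_add D' Y0)
    then have "(\<lambda>j. \<integral>z. indicator (QT T) z * (rho j z powr k j * g z) \<partial>lborel) \<longlonglongrightarrow> 0" by simp
    with X show ?thesis using LIMSEQ_unique by blast
  qed
  have fm: "(\<lambda>z. p z * (1 - r z)) \<in> borel_measurable lborel" using pm r_meas by measurable
  have fb: "AE z in lborel. z \<in> QT T \<longrightarrow> \<bar>p z * (1 - r z)\<bar> \<le> Cp"
    using Cp rQ
  proof eventually_elim
    case (elim z)
    show ?case
    proof
      assume z: "z \<in> QT T"
      have "\<bar>p z * (1 - r z)\<bar> \<le> Cp * 1"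
        unfolding abs_mult using elim z Cp_nn by (intro mult_mono) auto
      then show "\<bar>p z * (1 - r z)\<bar> \<le> Cp" by simp
    qed
  qed
  have c1: "AE z in lborel. z \<in> QT T \<longrightarrow> p z * (1 - r z) \<le> 0"
    by (rule sign_lemma[OF fm QTm fb]) (use Z in simp)
  have c2: "AE z in lborel. z \<in> QT T \<longrightarrow> - (p z * (1 - r z)) \<le> 0"
  proof (rule sign_lemma[OF _ QTm])
    show "(\<lambda>z. - (p z * (1 - r z))) \<in> borel_measurable lborel" using fm by measurable
    show "AE z in lborel. z \<in> QT T \<longrightarrow> \<bar>- (p z * (1 - r z))\<bar> \<le> Cp" using fb by simp
    fix A :: "(real \<times> (real^'d)) set" assume A: "A \<in> sets lborel" "A \<subseteq> QT T" "bounded A"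
    show "(\<integral>z. indicator A z * - (p z * (1 - r z)) \<partial>lborel) \<le> 0" using Z[OF A] by simp
  qed
  have comp: "AE z in lborel. z \<in> QT T \<longrightarrow> p z * (1 - r z) = 0"
    using c1 c2 by eventually_elim auto
  have eqn: "(LINT z:QT T|lborel. r z * dt \<phi> z + r z * (1 - p z) * (U (snd z) \<bullet> grad_x \<phi> z)) = 0"
    if tf: "test_fun ({0<..<T} \<times> UNIV) \<phi>" for \<phi> :: "real \<times> (real^'d) \<Rightarrow> real"
  proof -
    define S where "S = closure {z. \<phi> z \<noteq> 0}"
    have sm: "smooth_on UNIV \<phi>" and Sc: "compact S" and SQ: "S \<subseteq> {0<..<T} \<times> UNIV"
      using tf unfolding test_fun_def S_def by blast+
    have Scl: "closed S" by (rule compact_imp_closed[OF Sc])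
    have phi0: "\<phi> z = 0" if "z \<notin> S" for z
    proof (rule ccontr)
      assume "\<phi> z \<noteq> 0"
      then have "z \<in> {z. \<phi> z \<noteq> 0}" by simp
      then have "z \<in> S" unfolding S_def by (rule subsetD[OF closure_subset])
      with that show False by simp
    qed
    have "{0<..<T} \<times> (UNIV :: (real^'d) set) \<subseteq> QT T" unfolding QT_def by (intro Sigma_mono) auto
    then have "S \<subseteq> QT T" using SQ by (rule subset_trans[rotated])
    then obtain n where SK: "S \<subseteq> K n" using Kex compact_imp_bounded[OF Sc] by blast
    have "{0<..<T} \<times> (UNIV :: (real^'d) set) \<subseteq> {..<T} \<times> UNIV" by (intro Sigma_mono) auto
    then have tf2: "test_fun ({..<T} \<times> UNIV) \<phi>" using tf unfolding test_fun_def by (meson subset_trans)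
    have phit0: "\<phi> (0, x) = 0" for x
    proof -
      have "(0, x) \<notin> S" using SQ by (auto simp: subset_iff)
      then show ?thesis by (rule phi0)
    qed
    define V where "V z = U (snd z) \<bullet> grad_x \<phi> z" for z
    define L where "L = lap_x \<phi>"
    have weak: "(LINT z:QT T|lborel. rho j z * dt \<phi> z + Fk (k j) (rho j z) * V z + eps j * rho j z * L z) = 0" for j
    proof -
      have "(LINT z:QT T|lborel. rho j z * dt \<phi> z + Fk (k j) (rho j z) * (U (snd z) \<bullet> grad_x \<phi> z)
                              + eps j * rho j z * lap_x \<phi> z)
            + (\<integral>x. rho0 x * \<phi> (0, x) \<partial>lborel) = 0"
        using par[of j] tf2 unfolding parabolic_sol_def by blast
      moreover have "(\<integral>x. rho0 x * \<phi> (0, x) \<partial>lborel) = 0" by (simp add: phit0)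
      ultimately show ?thesis unfolding V_def L_def by simp
    qed
    have dt_eq: "dt \<phi> = iter_dderiv \<phi> [(1,0)]" by (simp add: dt_def)
    have dx_eq: "dx i \<phi> = iter_dderiv \<phi> [(0, axis i 1)]" for i by (simp add: dx_def)
    have dxx_eq: "dx i (dx i \<phi>) = iter_dderiv \<phi> [(0, axis i 1), (0, axis i 1)]" for i by (simp add: dx_def)
    have L_eq: "L = (\<lambda>z. \<Sum>i\<in>UNIV. iter_dderiv \<phi> [(0, axis i 1), (0, axis i 1)] z)"
      unfolding L_def lap_x_def dxx_eq by simp
    have iz: "iter_dderiv \<phi> vs z = 0" if "z \<notin> S" for vs z
      by (rule iter_zero_outside[OF Scl phi0 that])
    obtain Mt where Mt: "Mt \<ge> 0" "\<And>z. \<bar>dt \<phi> z\<bar> \<le> Mt"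
      using cont_bounded[OF iter_cont[OF sm, of "[(1,0)]"] Sc iz] unfolding dt_eq by blast
    obtain Lb where Lb: "Lb \<ge> 0" "\<And>z. \<bar>L z\<bar> \<le> Lb"
    proof -
      have "continuous_on UNIV L" unfolding L_eq by (intro continuous_on_sum iter_cont[OF sm])
      moreover have "L z = 0" if "z \<notin> S" for z unfolding L_eq by (simp only: iz[OF that] sum.neutral_const)
      ultimately show ?thesis using cont_bounded[OF _ Sc] that by blast
    qed
    define gs where "gs z = (\<Sum>i\<in>UNIV. \<bar>dx i \<phi> z\<bar>)" for z
    obtain Mg where Mg: "Mg \<ge> 0" "\<And>z. \<bar>gs z\<bar> \<le> Mg"
    proof -
      have "continuous_on UNIV gs" unfolding gs_def dx_eq
        by (intro continuous_on_sum continuous_on_rabs iter_cont[OF sm])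
      moreover have "gs z = 0" if "z \<notin> S" for z unfolding gs_def dx_eq by (simp only: iz[OF that] abs_zero sum.neutral_const)
      ultimately show ?thesis using cont_bounded[OF _ Sc] that by blast
    qed
    have dxb: "\<bar>dx i \<phi> z\<bar> \<le> gs z" for i z
      unfolding gs_def by (rule member_le_sum) auto
    have Um: "(\<lambda>x. U x $ m) \<in> borel_measurable lborel" for m
      using U_W2inf unfolding W2inf_def Linf_def by blast
    have "\<forall>m. \<exists>C. AE x in lborel. x \<in> UNIV \<longrightarrow> \<bar>U x $ m\<bar> \<le> C"
      using U_W2inf unfolding W2inf_def Linf_def by blast
    then have "\<forall>m. \<exists>C. AE x in lborel. \<bar>U x $ m\<bar> \<le> C" by simp
    then obtain Cm where Cm: "\<And>m. AE x in lborel. \<bar>U x $ m\<bar> \<le> Cm m" by metis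
    define CU where "CU = (\<Sum>m\<in>UNIV. \<bar>Cm m\<bar>)"
    have CU0: "CU \<ge> 0" unfolding CU_def by (simp add: sum_nonneg)
    have UbX: "AE x in lborel. \<forall>m\<in>UNIV. \<bar>U x $ m\<bar> \<le> CU"
    proof -
      have "AE x in lborel. \<forall>m\<in>UNIV. \<bar>U x $ m\<bar> \<le> Cm m"
        by (subst AE_finite_all) (use Cm in auto)
      then show ?thesis
      proof (rule eventually_mono)
        fix x assume h: "\<forall>m\<in>UNIV. \<bar>U x $ m\<bar> \<le> Cm m"
        have "\<bar>Cm m\<bar> \<le> CU" for m unfolding CU_def by (rule member_le_sum) auto
        then show "\<forall>m\<in>UNIV. \<bar>U x $ m\<bar> \<le> CU" using h by (meson abs_ge_self order_trans)
      qed
    qed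
    have Usm: "(\<lambda>z. U (snd z) $ m) \<in> borel_measurable (lborel :: (real \<times> (real^'d)) measure)" for m
    proof -
      have "(\<lambda>z. U (snd z) $ m) \<in> borel_measurable (lborel \<Otimes>\<^sub>M (lborel :: (real^'d) measure))"
        by (rule measurable_compose[OF measurable_snd Um])
      then show ?thesis by (simp add: lborel_prod)
    qed
    have Ub: "AE z in (lborel :: (real \<times> (real^'d)) measure). \<forall>m\<in>UNIV. \<bar>U (snd z) $ m\<bar> \<le> CU"
    proof -
      have "AE z in (lborel :: real measure) \<Otimes>\<^sub>M (lborel :: (real^'d) measure). \<forall>m\<in>UNIV. \<bar>U (snd z) $ m\<bar> \<le> CU"
      proof (rule lborel_pair.AE_pair_measure)
        have "Measurable.pred (lborel \<Otimes>\<^sub>M lborel) (\<lambda>z. \<forall>m\<in>UNIV. \<bar>U (snd z) $ m\<bar> \<le> CU)"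
        proof -
          have Usm2: "(\<lambda>z. U (snd z) $ m) \<in> borel_measurable (lborel \<Otimes>\<^sub>M (lborel :: (real^'d) measure))" for m
            by (rule measurable_compose[OF measurable_snd Um])
          show ?thesis
          proof (intro pred_intros_finite)
            fix m :: 'd
            show "Measurable.pred (lborel \<Otimes>\<^sub>M lborel) (\<lambda>z. \<bar>U (snd z) $ m\<bar> \<le> CU)"
              using Usm2[of m] by measurable
          qed simp
        qed
        then show "{z \<in> space (lborel \<Otimes>\<^sub>M lborel). \<forall>m\<in>UNIV. \<bar>U (snd z) $ m\<bar> \<le> CU} \<in> sets (lborel \<Otimes>\<^sub>M lborel)"
          by (simp add: pred_def)
        show "AE x in lborel. AE y in lborel. \<forall>m\<in>UNIV. \<bar>U (snd (x, y)) $ m\<bar> \<le> CU"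
          using UbX by simp
      qed
      then show ?thesis by (subst lborel_prod[symmetric])
    qed
    have V_eq: "V z = (\<Sum>i\<in>UNIV. U (snd z) $ i * dx i \<phi> z)" for z
      unfolding V_def grad_x_def inner_vec_def by simp
    define MV where "MV = CU * Mg"
    have MV0: "MV \<ge> 0" unfolding MV_def using CU0 Mg by simp
    have Vb: "AE z in lborel. \<bar>V z\<bar> \<le> MV"
      using Ub
    proof (rule eventually_mono)
      fix z :: "real \<times> (real^'d)" assume h: "\<forall>m\<in>UNIV. \<bar>U (snd z) $ m\<bar> \<le> CU"
      have "\<bar>V z\<bar> \<le> (\<Sum>i\<in>UNIV. \<bar>U (snd z) $ i * dx i \<phi> z\<bar>)" unfolding V_eq by (rule sum_abs)
      also have "\<dots> \<le> (\<Sum>i\<in>UNIV. CU * \<bar>dx i \<phi> z\<bar>)"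
        by (intro sum_mono) (use h in \<open>auto simp: abs_mult intro: mult_right_mono\<close>)
      also have "\<dots> = CU * gs z" unfolding gs_def by (simp add: sum_distrib_left)
      also have "\<dots> \<le> CU * Mg" using Mg(2)[of z] CU0 by (simp add: mult_left_mono)
      finally show "\<bar>V z\<bar> \<le> MV" unfolding MV_def .
    qed
    have V0: "V z = 0" if "z \<notin> S" for z unfolding V_eq dx_eq by (simp only: iz[OF that] mult_zero_right sum.neutral_const)
    have Vm: "V \<in> borel_measurable lborel"
      unfolding V_eq[abs_def] dx_eq
      by (intro borel_measurable_sum borel_measurable_times Usm iter_meas[OF sm])
    have Lm: "L \<in> borel_measurable lborel" unfolding L_eq
      by (intro borel_measurable_sum iter_meas[OF sm])
    have dtm: "dt \<phi> \<in> borel_measurable lborel" unfolding dt_eq by (rule iter_meas[OF sm])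
    have L0: "L z = 0" if "z \<notin> S" for z unfolding L_eq by (simp only: iz[OF that] sum.neutral_const)
    have dt0: "dt \<phi> z = 0" if "z \<notin> S" for z unfolding dt_eq by (rule iz[OF that])
    have SK': "z \<in> S \<Longrightarrow> z \<in> K n \<and> z \<in> QT T" for z using SK KQ by blast
    have gen: "(\<forall>j. integrable lborel (\<lambda>z. indicator (QT T) z * (rho j z * G z)))
      \<and> integrable lborel (\<lambda>z. indicator (QT T) z * (r z * G z))
      \<and> (\<lambda>j. \<integral>z. indicator (QT T) z * (rho j z * G z) \<partial>lborel) \<longlonglongrightarrow> (\<integral>z. indicator (QT T) z * (r z * G z) \<partial>lborel)"
      if Gm: "G \<in> borel_measurable lborel" and Gb: "AE z in lborel. \<bar>G z\<bar> \<le> MG"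
        and MG: "0 \<le> MG" and G0: "\<And>z. z \<notin> S \<Longrightarrow> G z = 0" for G MG
    proof -
      have i1: "integrable lborel (\<lambda>z. indicator (QT T) z * (rho j z * G z))" for j
      proof (rule int_bound[OF _ Km Kb, of _ MG n])
        show "(\<lambda>z. indicator (QT T) z * (rho j z * G z)) \<in> borel_measurable lborel"
          using QTm Gm rm by measurable
        show "AE z in lborel. \<bar>indicator (QT T) z * (rho j z * G z)\<bar> \<le> MG * indicator (K n) z"
          using Gb
        proof (rule eventually_mono)
          fix z assume g: "\<bar>G z\<bar> \<le> MG"
          show "\<bar>indicator (QT T) z * (rho j z * G z)\<bar> \<le> MG * indicator (K n) z"
          proof (cases "z \<in> S")
            case True
            then have "z \<in> K n" "z \<in> QT T" using SK' by auto
            moreover have "\<bar>rho j z\<bar> \<le> 1" using rb[OF \<open>z \<in> QT T\<close>, of j] by simp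
            ultimately show ?thesis using abs_mult_le[OF \<open>\<bar>rho j z\<bar> \<le> 1\<close> g] by simp
          qed (simp add: G0 MG)
        qed
      qed
      have i2: "integrable lborel (\<lambda>z. indicator (QT T) z * (r z * G z))"
      proof (rule int_bound[OF _ Km Kb, of _ MG n])
        show "(\<lambda>z. indicator (QT T) z * (r z * G z)) \<in> borel_measurable lborel"
          using QTm Gm r_meas by measurable
        show "AE z in lborel. \<bar>indicator (QT T) z * (r z * G z)\<bar> \<le> MG * indicator (K n) z"
          using Gb rQ
        proof eventually_elim
          case (elim z)
          show ?case
          proof (cases "z \<in> S")
            case True
            then have "z \<in> K n" "z \<in> QT T" using SK' by auto
            moreover have "\<bar>r z\<bar> \<le> 1" using elim \<open>z \<in> QT T\<close> by simp
            ultimately show ?thesis using abs_mult_le[OF \<open>\<bar>r z\<bar> \<le> 1\<close>, of "G z" MG] elim by simp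
          qed (simp add: G0 MG)
        qed
      qed
      have "(\<lambda>j. \<integral>z. indicator (QT T) z * (rho j z * G z) - indicator (QT T) z * (r z * G z) \<partial>lborel) \<longlonglongrightarrow> 0"
      proof (rule C[of MG _ n, folded K_def, OF MG])
        fix j
        show "AE z in lborel. \<bar>indicator (QT T) z * (rho j z * G z) - indicator (QT T) z * (r z * G z)\<bar>
            \<le> MG * (\<bar>rho j z - r z\<bar> * indicator (K n) z)"
          using Gb
        proof (rule eventually_mono)
          fix z assume g: "\<bar>G z\<bar> \<le> MG"
          show "\<bar>indicator (QT T) z * (rho j z * G z) - indicator (QT T) z * (r z * G z)\<bar>
            \<le> MG * (\<bar>rho j z - r z\<bar> * indicator (K n) z)"
          proof (cases "z \<in> S")
            case True
            then have "z \<in> K n" "z \<in> QT T" using SK' by auto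
            have e: "indicator (QT T) z * (rho j z * G z) - indicator (QT T) z * (r z * G z) = G z * (rho j z - r z)"
              using \<open>z \<in> QT T\<close> by (simp add: algebra_simps)
            show ?thesis unfolding e using abs_mult_le[OF g order_refl, of "rho j z - r z"] \<open>z \<in> K n\<close> by simp
          qed (simp add: G0 MG)
        qed
      qed
      then have "(\<lambda>j. (\<integral>z. indicator (QT T) z * (rho j z * G z) \<partial>lborel) - (\<integral>z. indicator (QT T) z * (r z * G z) \<partial>lborel)) \<longlonglongrightarrow> 0"
        by (subst (asm) Bochner_Integration.integral_diff[OF i1 i2]) simp
      then have "(\<lambda>j. \<integral>z. indicator (QT T) z * (rho j z * G z) \<partial>lborel) \<longlonglongrightarrow> (\<integral>z. indicator (QT T) z * (r z * G z) \<partial>lborel)"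
        by (rule LIM_zero_cancel)
      then show ?thesis using i1 i2 by blast
    qed
    have id_: "integrable lborel (\<lambda>z. indicator (QT T) z * (rho j z powr k j * (rho j z * V z)))" for j
    proof (rule int_bound[OF _ Km Kb, of _ MV n])
      show "(\<lambda>z. indicator (QT T) z * (rho j z powr k j * (rho j z * V z))) \<in> borel_measurable lborel"
        using QTm Vm rm powr_m by measurable
      show "AE z in lborel. \<bar>indicator (QT T) z * (rho j z powr k j * (rho j z * V z))\<bar> \<le> MV * indicator (K n) z"
        using Vb
      proof (rule eventually_mono)
        fix z assume g: "\<bar>V z\<bar> \<le> MV"
        show "\<bar>indicator (QT T) z * (rho j z powr k j * (rho j z * V z))\<bar> \<le> MV * indicator (K n) z"
        proof (cases "z \<in> S")
          case True
          then have "z \<in> K n" "z \<in> QT T" using SK' by auto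
          moreover have "\<bar>rho j z\<bar> \<le> 1" "\<bar>rho j z powr k j\<bar> \<le> 1"
            using rb[OF \<open>z \<in> QT T\<close>, of j] pow_b[OF \<open>z \<in> QT T\<close>, of j] by auto
          ultimately show ?thesis
            using abs_mult_le[OF \<open>\<bar>rho j z powr k j\<bar> \<le> 1\<close> abs_mult_le[OF \<open>\<bar>rho j z\<bar> \<le> 1\<close> g]] by simp
        qed (simp add: V0 MV0)
      qed
    qed
    have ie: "integrable lborel (\<lambda>z. indicator (QT T) z * (rho j z powr k j * (r z * V z)))" for j
    proof (rule int_bound[OF _ Km Kb, of _ MV n])
      show "(\<lambda>z. indicator (QT T) z * (rho j z powr k j * (r z * V z))) \<in> borel_measurable lborel"
        using QTm Vm r_meas powr_m by measurable
      show "AE z in lborel. \<bar>indicator (QT T) z * (rho j z powr k j * (r z * V z))\<bar> \<le> MV * indicator (K n) z"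
        using Vb rQ
      proof eventually_elim
        case (elim z)
        show ?case
        proof (cases "z \<in> S")
          case True
          then have "z \<in> K n" "z \<in> QT T" using SK' by auto
          moreover have "\<bar>r z\<bar> \<le> 1" "\<bar>rho j z powr k j\<bar> \<le> 1"
            using elim pow_b[OF \<open>z \<in> QT T\<close>, of j] \<open>z \<in> QT T\<close> by auto
          ultimately show ?thesis
            using abs_mult_le[OF \<open>\<bar>rho j z powr k j\<bar> \<le> 1\<close> abs_mult_le[OF \<open>\<bar>r z\<bar> \<le> 1\<close>, of "V z" MV]] elim by simp
        qed (simp add: V0 MV0)
      qed
    qed
    have iV: "integrable lborel (\<lambda>z. indicator (QT T) z * (r z * V z))"
      using gen[OF Vm Vb MV0 V0] by blast
    have if_: "integrable lborel (\<lambda>z. indicator (QT T) z * (p z * (r z * V z)))"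
    proof (rule int_bound[OF _ Km Kb, of _ "Cp * MV" n])
      show "(\<lambda>z. indicator (QT T) z * (p z * (r z * V z))) \<in> borel_measurable lborel"
        using QTm Vm r_meas pm by measurable
      show "AE z in lborel. \<bar>indicator (QT T) z * (p z * (r z * V z))\<bar> \<le> Cp * MV * indicator (K n) z"
        using Vb rQ Cp
      proof eventually_elim
        case (elim z)
        show ?case
        proof (cases "z \<in> S")
          case True
          then have "z \<in> K n" "z \<in> QT T" using SK' by auto
          moreover have "\<bar>r z\<bar> \<le> 1" "\<bar>p z\<bar> \<le> Cp"
            using elim \<open>z \<in> QT T\<close> by auto
          ultimately show ?thesis
            using abs_mult_le[OF \<open>\<bar>p z\<bar> \<le> Cp\<close> abs_mult_le[OF \<open>\<bar>r z\<bar> \<le> 1\<close>, of "V z" MV]] elim by simp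
        qed (simp add: V0 MV0 Cp_nn)
      qed
    qed
    have limc: "(\<lambda>j. \<integral>z. indicator (QT T) z * (rho j z powr k j * (rho j z * V z)) \<partial>lborel)
        \<longlonglongrightarrow> (\<integral>z. indicator (QT T) z * (p z * (r z * V z)) \<partial>lborel)"
    proof -
      have "(\<lambda>j. \<integral>z. indicator (QT T) z * (rho j z powr k j * (rho j z * V z))
                  - indicator (QT T) z * (rho j z powr k j * (r z * V z)) \<partial>lborel) \<longlonglongrightarrow> 0"
      proof (rule C[of MV _ n, folded K_def, OF MV0])
        fix j
        show "AE z in lborel. \<bar>indicator (QT T) z * (rho j z powr k j * (rho j z * V z))
                  - indicator (QT T) z * (rho j z powr k j * (r z * V z))\<bar>
            \<le> MV * (\<bar>rho j z - r z\<bar> * indicator (K n) z)"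
          using Vb
        proof (rule eventually_mono)
          fix z assume g: "\<bar>V z\<bar> \<le> MV"
          show "\<bar>indicator (QT T) z * (rho j z powr k j * (rho j z * V z))
                  - indicator (QT T) z * (rho j z powr k j * (r z * V z))\<bar>
            \<le> MV * (\<bar>rho j z - r z\<bar> * indicator (K n) z)"
          proof (cases "z \<in> S")
            case True
            then have "z \<in> K n" "z \<in> QT T" using SK' by auto
            have pb: "\<bar>rho j z powr k j\<bar> \<le> 1" using pow_b[OF \<open>z \<in> QT T\<close>, of j] by auto
            have e: "indicator (QT T) z * (rho j z powr k j * (rho j z * V z))
                  - indicator (QT T) z * (rho j z powr k j * (r z * V z))
                 = rho j z powr k j * (V z * (rho j z - r z))"
              using \<open>z \<in> QT T\<close> by (simp add: right_diff_distrib)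
            have "\<bar>rho j z powr k j * (V z * (rho j z - r z))\<bar> \<le> 1 * (MV * \<bar>rho j z - r z\<bar>)"
              by (rule abs_mult_le[OF pb abs_mult_le[OF g order_refl]])
            then show ?thesis unfolding e using \<open>z \<in> K n\<close> by simp
          qed (simp add: V0 MV0)
        qed
      qed
      then have D: "(\<lambda>j. (\<integral>z. indicator (QT T) z * (rho j z powr k j * (rho j z * V z)) \<partial>lborel)
                  - (\<integral>z. indicator (QT T) z * (rho j z powr k j * (r z * V z)) \<partial>lborel)) \<longlonglongrightarrow> 0"
        by (subst (asm) Bochner_Integration.integral_diff[OF id_ ie]) simp
      have "set_integrable lborel (QT T) (\<lambda>z. r z * V z)" unfolding sint by (rule iV)
      then have "(\<lambda>j. LINT z:QT T|lborel. (rho j z powr k j) * (r z * V z))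
          \<longlonglongrightarrow> (LINT z:QT T|lborel. p z * (r z * V z))" using p_conv by blast
      then have P: "(\<lambda>j. \<integral>z. indicator (QT T) z * (rho j z powr k j * (r z * V z)) \<partial>lborel)
          \<longlonglongrightarrow> (\<integral>z. indicator (QT T) z * (p z * (r z * V z)) \<partial>lborel)" unfolding sli .
      have "(\<lambda>j. ((\<integral>z. indicator (QT T) z * (rho j z powr k j * (rho j z * V z)) \<partial>lborel)
                  - (\<integral>z. indicator (QT T) z * (rho j z powr k j * (r z * V z)) \<partial>lborel))
                 + (\<integral>z. indicator (QT T) z * (rho j z powr k j * (r z * V z)) \<partial>lborel))
          \<longlonglongrightarrow> 0 + (\<integral>z. indicator (QT T) z * (p z * (r z * V z)) \<partial>lborel)"
        by (rule tendsto_add[OF D P])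
      then show ?thesis by simp
    qed
    have Gt: "AE z in lborel. \<bar>dt \<phi> z\<bar> \<le> Mt" using Mt(2) by simp
    have GL: "AE z in lborel. \<bar>L z\<bar> \<le> Lb" using Lb(2) by simp
    note gt = gen[OF dtm Gt Mt(1) dt0]
    note gV = gen[OF Vm Vb MV0 V0]
    note gL = gen[OF Lm GL Lb(1) L0]
    define a where "a j = (\<integral>z. indicator (QT T) z * (rho j z * dt \<phi> z) \<partial>lborel)" for j
    define b where "b j = (\<integral>z. indicator (QT T) z * (rho j z * V z) \<partial>lborel)" for j
    define c where "c j = (\<integral>z. indicator (QT T) z * (rho j z powr k j * (rho j z * V z)) \<partial>lborel)" for j
    define d where "d j = (\<integral>z. indicator (QT T) z * (rho j z * L z) \<partial>lborel)" for j
    have sum0: "a j + b j - c j + eps j * d j = 0" for j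
    proof -
      have ia: "integrable lborel (\<lambda>z. indicator (QT T) z * (rho j z * dt \<phi> z))" using gt by blast
      have ib: "integrable lborel (\<lambda>z. indicator (QT T) z * (rho j z * V z))" using gV by blast
      have ic: "integrable lborel (\<lambda>z. indicator (QT T) z * (rho j z powr k j * (rho j z * V z)))" by (rule id_)
      have idd: "integrable lborel (\<lambda>z. eps j * (indicator (QT T) z * (rho j z * L z)))"
        using gL by (intro integrable_mult_right) blast
      have iab: "integrable lborel (\<lambda>z. indicator (QT T) z * (rho j z * dt \<phi> z) + indicator (QT T) z * (rho j z * V z))"
        by (rule Bochner_Integration.integrable_add[OF ia ib])
      have iabc: "integrable lborel (\<lambda>z. indicator (QT T) z * (rho j z * dt \<phi> z) + indicator (QT T) z * (rho j z * V z)
            - indicator (QT T) z * (rho j z powr k j * (rho j z * V z)))"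
        by (rule Bochner_Integration.integrable_diff[OF iab ic])
      have "0 = (LINT z:QT T|lborel. rho j z * dt \<phi> z + Fk (k j) (rho j z) * V z + eps j * rho j z * L z)"
        using weak[of j] by simp
      also have "\<dots> = (\<integral>z. (indicator (QT T) z * (rho j z * dt \<phi> z) + indicator (QT T) z * (rho j z * V z)
            - indicator (QT T) z * (rho j z powr k j * (rho j z * V z)))
            + eps j * (indicator (QT T) z * (rho j z * L z)) \<partial>lborel)"
        unfolding sli by (intro Bochner_Integration.integral_cong refl) (simp add: Fk_def algebra_simps)
      also have "\<dots> = a j + b j - c j + eps j * d j"
        unfolding a_def b_def c_def d_def
        by (simp only: Bochner_Integration.integral_add[OF iabc idd] Bochner_Integration.integral_diff[OF iab ic]
              Bochner_Integration.integral_add[OF ia ib] Bochner_Integration.integral_mult_right_zero)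
      finally show ?thesis by simp
    qed
    define A0 where "A0 = (\<integral>z. indicator (QT T) z * (r z * dt \<phi> z) \<partial>lborel)"
    define B0 where "B0 = (\<integral>z. indicator (QT T) z * (r z * V z) \<partial>lborel)"
    define C0 where "C0 = (\<integral>z. indicator (QT T) z * (p z * (r z * V z)) \<partial>lborel)"
    define D0 where "D0 = (\<integral>z. indicator (QT T) z * (r z * L z) \<partial>lborel)"
    have "(\<lambda>j. a j + b j - c j + eps j * d j) \<longlonglongrightarrow> A0 + B0 - C0 + 0 * D0"
    proof (intro tendsto_add tendsto_diff tendsto_mult eps_lim)
      show "a \<longlonglongrightarrow> A0" unfolding a_def A0_def using gt by blast
      show "b \<longlonglongrightarrow> B0" unfolding b_def B0_def using gV by blast
      show "c \<longlonglongrightarrow> C0" unfolding c_def C0_def by (rule limc)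
      show "d \<longlonglongrightarrow> D0" unfolding d_def D0_def using gL by blast
    qed
    moreover have "(\<lambda>j. a j + b j - c j + eps j * d j) \<longlonglongrightarrow> 0" using sum0 by simp
    ultimately have lim0: "A0 + B0 - C0 = 0" using LIMSEQ_unique by fastforce
    have iA: "integrable lborel (\<lambda>z. indicator (QT T) z * (r z * dt \<phi> z))" using gt by blast
    have "(LINT z:QT T|lborel. r z * dt \<phi> z + r z * (1 - p z) * (U (snd z) \<bullet> grad_x \<phi> z))
        = (\<integral>z. (indicator (QT T) z * (r z * dt \<phi> z) + indicator (QT T) z * (r z * V z))
              - indicator (QT T) z * (p z * (r z * V z)) \<partial>lborel)"
      unfolding sli V_def[symmetric] by (intro Bochner_Integration.integral_cong refl) (simp add: algebra_simps)
    also have "\<dots> = A0 + B0 - C0"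
      unfolding A0_def B0_def C0_def
      by (simp only: Bochner_Integration.integral_diff[OF Bochner_Integration.integrable_add[OF iA iV] if_]
            Bochner_Integration.integral_add[OF iA iV])
    finally show ?thesis using lim0 by simp
  qed
  show ?thesis using rQ pQ eqn comp by blast
qed

end
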